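(* For any positive integers $n, q$ there exist an arena $\mathcal{A}$ (over a finite set of colors) with $n+3$ nodes, a node $u$ of $\mathcal{A}$, and a $q$-state strategy $S_1$ of Player 0 in $\mathcal{A}$ such that for every chromatic $Q$-state strategy $S_2$ of Player 0 in $\mathcal{A}$: if $\mathsf{col}(S_2,u)\subseteq\mathsf{col}(S_1,u)$, then $Q\ge q^n$.
   Context: An arena over a set of colors $C$ is a tuple $\mathcal{A} = \langle V, V_0, V_1, E\rangle$ of finite sets with $V = V_0 \sqcup V_1$, $E \subseteq V \times C \times V$, and every node having at least one outgoing edge; for $e=(s,c,t)$ write $\mathsf{source}(e)=s$, $\mathsf{col}(e)=c$, $\mathsf{target}(e)=t$. A path is a nonempty finite or infinite sequence of edges $e_1e_2\ldots$ with $\mathsf{target}(e_i)=\mathsf{source}(e_{i+1})$; for each node $v$ there is also a $0$-length path $\lambda_v$ with source and target $v$. $\mathsf{col}$ extends letterwise to sequences of edges. A strategy of Player 0 is a function $S$ assigning to each finite path $p$ with $\mathsf{target}(p)\in V_0$ an edge $S(p)$ with $\mathsf{source}(S(p))=\mathsf{target}(p)$. A path $p=e_1e_2\ldots$ is consistent with $S$ if (when $\mathsf{source}(p)\in V_0$) $e_1=S(\lambda_{\mathsf{source}(p)})$ and for each $1\le i<|p|$ with $\mathsf{target}(e_i)\in V_0$ we have $e_{i+1}=S(e_1\ldots e_i)$. For $v\in V$, $\mathsf{col}(S,v)\subseteq C^\omega$ is the set of $\mathsf{col}(p)$ over all infinite paths $p$ from $v$ consistent with $S$. A memory structure is $\mathcal{M}=\langle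 M, m_{init},\delta\rangle$ with $M$ finite, $m_{init}\in M$, $\delta: M\times E\to M$ (extended to finite edge sequences in the usual way). $S$ is an $\mathcal{M}$-strategy if for all finite paths $p_1,p_2$ with $\mathsf{target}(p_1)=\mathsf{target}(p_2)\in V_0$, $\delta(m_{init},p_1)=\delta(m_{init},p_2)$ implies $S(p_1)=S(p_2)$. $\mathcal{M}$ is chromatic if there is $\sigma: M\times C\to M$ with $\delta(m,e)=\sigma(m,\mathsf{col}(e))$ for all $m,e$. A (chromatic) $q$-state strategy is an $\mathcal{M}$-strategy for some (chromatic) memory structure $\mathcal{M}$ with $|M|=q$. *)

theory Defs
  imports Main
begin

type_synonym ('v,'c) edge = "'v \<times> 'c \<times> 'v"

definition src :: "('v,'c) edge \<Rightarrow> 'v" where "src e = fst e"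
definition col :: "('v,'c) edge \<Rightarrow> 'c" where "col e = fst (snd e)"
definition tgt :: "('v,'c) edge \<Rightarrow> 'v" where "tgt e = snd (snd e)"

record ('v,'c) arena =
  aV :: "'v set"
  aV0 :: "'v set"
  aV1 :: "'v set"
  aE :: "('v,'c) edge set"
  aC :: "'c set"

definition arena :: "('v,'c) arena \<Rightarrow> bool" where
  "arena A \<longleftrightarrow> finite (aV A) \<and> finite (aE A) \<and> finite (aC A) \<and>
     aV A = aV0 A \<union> aV1 A \<and> aV0 A \<inter> aV1 A = {} \<and>
     aE A \<subseteq> aV A \<times> aC A \<times> aV A \<and>
     (\<forall>v\<in>aV A. \<exists>e\<in>aE A. src e = v)"

text \<open>A finite path is represented by its source node v and its list of edges es
  (es = [] is the 0-length path lambda_v).\<close>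
fun chain_from :: "('v,'c) edge set \<Rightarrow> 'v \<Rightarrow> ('v,'c) edge list \<Rightarrow> bool" where
  "chain_from E v [] = True"
| "chain_from E v (e # es) = (e \<in> E \<and> src e = v \<and> chain_from E (tgt e) es)"

definition fin_path :: "('v,'c) arena \<Rightarrow> 'v \<Rightarrow> ('v,'c) edge list \<Rightarrow> bool" where
  "fin_path A v es \<longleftrightarrow> v \<in> aV A \<and> chain_from (aE A) v es"

definition ptarget :: "'v \<Rightarrow> ('v,'c) edge list \<Rightarrow> 'v" where
  "ptarget v es = (if es = [] then v else tgt (last es))"

definition strategy :: "('v,'c) arena \<Rightarrow> ('v \<Rightarrow> ('v,'c) edge list \<Rightarrow> ('v,'c) edge) \<Rightarrow> bool" where
  "strategy A S \<longleftrightarrow> (\<forall>v es. fin_path A v es \<and> ptarget v es \<in> aV0 A \<longrightarrow>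
      S v es \<in> aE A \<and> src (S v es) = ptarget v es)"

definition consistent_inf_path ::
  "('v,'c) arena \<Rightarrow> ('v \<Rightarrow> ('v,'c) edge list \<Rightarrow> ('v,'c) edge) \<Rightarrow> 'v \<Rightarrow> (nat \<Rightarrow> ('v,'c) edge) \<Rightarrow> bool" where
  "consistent_inf_path A S v p \<longleftrightarrow>
     (\<forall>i. p i \<in> aE A) \<and> src (p 0) = v \<and> (\<forall>i. tgt (p i) = src (p (Suc i))) \<and>
     (v \<in> aV0 A \<longrightarrow> p 0 = S v []) \<and>
     (\<forall>i. tgt (p i) \<in> aV0 A \<longrightarrow> p (Suc i) = S v (map p [0..<Suc i]))"

definition col_set ::
  "('v,'c) arena \<Rightarrow> ('v \<Rightarrow> ('v,'c) edge list \<Rightarrow> ('v,'c) edge) \<Rightarrow> 'v \<Rightarrow> (nat \<Rightarrow> 'c) set" where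
  "col_set A S v = {(\<lambda>i. col (p i)) | p. consistent_inf_path A S v p}"

text \<open>Memory structures (M, m_init, delta); memory states are taken from nat
  (any finite memory set is in bijection with a finite set of naturals).\<close>
definition memory_structure ::
  "('v,'c) arena \<Rightarrow> nat set \<Rightarrow> nat \<Rightarrow> (nat \<Rightarrow> ('v,'c) edge \<Rightarrow> nat) \<Rightarrow> bool" where
  "memory_structure A M m0 \<delta> \<longleftrightarrow> finite M \<and> m0 \<in> M \<and> (\<forall>m\<in>M. \<forall>e\<in>aE A. \<delta> m e \<in> M)"

definition chromatic ::
  "('v,'c) arena \<Rightarrow> nat set \<Rightarrow> (nat \<Rightarrow> ('v,'c) edge \<Rightarrow> nat) \<Rightarrow> bool" where
  "chromatic A M \<delta> \<longleftrightarrow> (\<exists>\<sigma>. \<forall>m\<in>M. \<forall>e\<in>aE A. \<delta> m e = \<sigma> m (col e))"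

definition is_M_strategy ::
  "('v,'c) arena \<Rightarrow> nat \<Rightarrow> (nat \<Rightarrow> ('v,'c) edge \<Rightarrow> nat) \<Rightarrow>
     ('v \<Rightarrow> ('v,'c) edge list \<Rightarrow> ('v,'c) edge) \<Rightarrow> bool" where
  "is_M_strategy A m0 \<delta> S \<longleftrightarrow>
     (\<forall>v1 es1 v2 es2. fin_path A v1 es1 \<and> fin_path A v2 es2 \<and>
        ptarget v1 es1 = ptarget v2 es2 \<and> ptarget v1 es1 \<in> aV0 A \<and>
        foldl \<delta> m0 es1 = foldl \<delta> m0 es2 \<longrightarrow> S v1 es1 = S v2 es2)"

definition q_state_strategy ::
  "('v,'c) arena \<Rightarrow> ('v \<Rightarrow> ('v,'c) edge list \<Rightarrow> ('v,'c) edge) \<Rightarrow> nat \<Rightarrow> bool" where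
  "q_state_strategy A S q \<longleftrightarrow> strategy A S \<and>
     (\<exists>M m0 \<delta>. memory_structure A M m0 \<delta> \<and> card M = q \<and> is_M_strategy A m0 \<delta> S)"

definition chromatic_q_state_strategy ::
  "('v,'c) arena \<Rightarrow> ('v \<Rightarrow> ('v,'c) edge list \<Rightarrow> ('v,'c) edge) \<Rightarrow> nat \<Rightarrow> bool" where
  "chromatic_q_state_strategy A S q \<longleftrightarrow> strategy A S \<and>
     (\<exists>M m0 \<delta>. memory_structure A M m0 \<delta> \<and> chromatic A M \<delta> \<and> card M = q \<and>
        is_M_strategy A m0 \<delta> S)"

end

theory Submission
  imports Defs
begin

definition EE :: "nat \<Rightarrow> nat \<Rightarrow> (nat,nat) edge set" where
 "EE n q = (\<lambda>i. (0, n*q+n+q, 3+i)) ` {..<n}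
   \<union> (\<lambda>(i,k,t). (3+i, k*q+t, 3+i)) ` ({..<n} \<times> {..<n} \<times> {..<q})
   \<union> (\<lambda>i. (3+i, n*q+i, 1)) ` {..<n}
   \<union> (\<lambda>m. (1, n*q+n+m, 2)) ` {..<q}
   \<union> {(2, n*q+n+q, 2)}"

definition Ar :: "nat \<Rightarrow> nat \<Rightarrow> (nat,nat) arena" where
 "Ar n q = \<lparr>aV = {..<n+3}, aV0 = {1}, aV1 = {..<n+3} - {1}, aE = EE n q,
    aC = (\<lambda>e. fst (snd e)) ` EE n q\<rparr>"

definition d1 :: "nat \<Rightarrow> nat \<Rightarrow> nat \<Rightarrow> (nat,nat) edge \<Rightarrow> nat" where
 "d1 n q m e = (if col e < n*q \<and> col e div q = src e - 3 then col e mod q else m)"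

definition S1 :: "nat \<Rightarrow> nat \<Rightarrow> nat \<Rightarrow> (nat,nat) edge list \<Rightarrow> (nat,nat) edge" where
 "S1 n q v es = (1, n*q+n+(foldl (d1 n q) 0 es mod q), 2)"

lemma kq_less: "k < n \<Longrightarrow> t < (q::nat) \<Longrightarrow> k*q+t < n*q"
proof -
  assume a: "k < n" "t < q"
  have "k*q+t < k*q + q" using a by simp
  also have "\<dots> = Suc k * q" by simp
  also have "\<dots> \<le> n*q" using a by (intro mult_right_mono) auto
  finally show ?thesis .
qed

lemma kq_div: "t < (q::nat) \<Longrightarrow> (k*q+t) div q = k"
  by simp

lemma kq_mod: "t < (q::nat) \<Longrightarrow> (k*q+t) mod q = t"
  by simp

lemma arena_Ar: assumes n: "n > 0" and q: "q > 0" shows "arena (Ar n q)"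
proof -
  have f: "finite (EE n q)" unfolding EE_def by auto
  have sub: "EE n q \<subseteq> {..<n+3} \<times> (\<lambda>e. fst (snd e)) ` EE n q \<times> {..<n+3}"
  proof
    fix e assume e: "e \<in> EE n q"
    have "fst e < n+3 \<and> snd (snd e) < n+3" using e unfolding EE_def by auto
    with e show "e \<in> {..<n+3} \<times> (\<lambda>e. fst (snd e)) ` EE n q \<times> {..<n+3}"
      by (cases e) force
  qed
  have out: "\<forall>v\<in>{..<n+3}. \<exists>e\<in>EE n q. src e = v"
  proof
    fix v assume v: "v \<in> {..<n+3}"
    consider "v = 0" | "v = 1" | "v = 2" | "v \<ge> 3" by linarith
    then show "\<exists>e\<in>EE n q. src e = v"
    proof cases
      case 1 then show ?thesis using n by (intro bexI[of _ "(0, n*q+n+q, 3+0)"]) (auto simp: EE_def src_def)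
    next
      case 2 then show ?thesis using q by (intro bexI[of _ "(1, n*q+n+0, 2)"]) (auto simp: EE_def src_def)
    next
      case 3 then show ?thesis by (intro bexI[of _ "(2, n*q+n+q, 2)"]) (auto simp: EE_def src_def)
    next
      case 4
      then obtain i where i: "v = 3+i" "i < n" using v by (metis add.commute le_add_diff_inverse lessThan_iff nat_add_left_cancel_less)
      have "(3+i, n*q+i, 1) \<in> EE n q" unfolding EE_def using i by blast
      then show ?thesis using i by (intro bexI[of _ "(3+i, n*q+i, 1)"]) (auto simp: src_def)
    qed
  qed
  show ?thesis unfolding arena_def Ar_def using f sub out by auto
qed


lemma S1_qstate: assumes n: "n > 0" and q: "q > 0" shows "q_state_strategy (Ar n q) (S1 n q) q"
proof -
  have st: "strategy (Ar n q) (S1 n q)"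
    unfolding strategy_def
  proof (intro allI impI)
    fix v es assume "fin_path (Ar n q) v es \<and> ptarget v es \<in> aV0 (Ar n q)"
    then have t: "ptarget v es = 1" by (simp add: Ar_def)
    have "S1 n q v es \<in> EE n q" unfolding S1_def EE_def using q by auto
    then show "S1 n q v es \<in> aE (Ar n q) \<and> src (S1 n q v es) = ptarget v es"
      using t by (simp add: Ar_def S1_def src_def)
  qed
  have ms: "memory_structure (Ar n q) {..<q} 0 (d1 n q)"
    unfolding memory_structure_def d1_def using q by auto
  have mst: "is_M_strategy (Ar n q) 0 (d1 n q) (S1 n q)"
    unfolding is_M_strategy_def S1_def by auto
  show ?thesis unfolding q_state_strategy_def using st ms mst by fastforce
qed

lemma chain_append: "chain_from E v (xs@ys) = (chain_from E v xs \<and> chain_from E (ptarget v xs) ys)"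
  by (induction xs arbitrary: v) (auto simp: ptarget_def)

lemma chain_map: "(\<forall>i<k. f i \<in> E) \<Longrightarrow> (\<forall>i. Suc i < k \<longrightarrow> tgt (f i) = src (f (Suc i))) \<Longrightarrow>
   (0 < k \<longrightarrow> src (f 0) = v) \<Longrightarrow> chain_from E v (map f [0..<k])"
proof (induction k)
  case 0 then show ?case by simp
next
  case (Suc k)
  have c: "chain_from E v (map f [0..<k])" using Suc by auto
  have "chain_from E (ptarget v (map f [0..<k])) [f k]"
  proof (cases k)
    case 0 then show ?thesis using Suc.prems by (simp add: ptarget_def)
  next
    case (Suc k') then show ?thesis using Suc.prems by (simp add: ptarget_def)
  qed
  then show ?case using c by (simp add: chain_append)
qed

lemma ptarget_map: "ptarget v (map f [0..<Suc k]) = tgt (f k)"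
  by (simp add: ptarget_def)

lemma fold_chrom: "set es \<subseteq> E \<Longrightarrow> \<forall>m\<in>M. \<forall>e\<in>E. \<delta> m e \<in> M \<Longrightarrow>
  \<forall>m\<in>M. \<forall>e\<in>E. \<delta> m e = \<sigma> m (col e) \<Longrightarrow> m \<in> M \<Longrightarrow>
  foldl \<delta> m es = foldl \<sigma> m (map col es) \<and> foldl \<delta> m es \<in> M"
proof (induction es arbitrary: m)
  case Nil then show ?case by simp
next
  case (Cons a es)
  have a: "a \<in> E" "set es \<subseteq> E" using Cons.prems by auto
  have dm: "\<delta> m a \<in> M" using a Cons.prems by blast
  have eq: "\<delta> m a = \<sigma> m (col a)" using a Cons.prems by blast
  have "foldl \<delta> (\<delta> m a) es = foldl \<sigma> (\<delta> m a) (map col es) \<and> foldl \<delta> (\<delta> m a) es \<in> M"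
    using Cons.IH[OF a(2) Cons.prems(2) Cons.prems(3) dm] .
  then show ?case using eq by (metis foldl_Cons list.simps(9))
qed

lemma EE_cases: "e \<in> EE n q \<Longrightarrow> (\<exists>i<n. e = (0,n*q+n+q,3+i)) \<or> (\<exists>i<n. \<exists>k<n. \<exists>t<q. e = (3+i,k*q+t,3+i))
   \<or> (\<exists>i<n. e=(3+i,n*q+i,1)) \<or> (\<exists>m<q. e = (1,n*q+n+m,2)) \<or> e = (2,n*q+n+q,2)"
  by (auto simp: EE_def)

definition p0 :: "nat \<Rightarrow> nat \<Rightarrow> nat list \<Rightarrow> nat \<Rightarrow> nat \<Rightarrow> (nat,nat) edge" where
 "p0 n q xs j i = (if i = 0 then (0, n*q+n+q, 3+j) else if i \<le> n then (3+j, (i-1)*q + xs!(i-1), 3+j)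
     else (3+j, n*q+j, 1))"

definition cx :: "nat \<Rightarrow> nat \<Rightarrow> nat list \<Rightarrow> nat \<Rightarrow> nat" where
 "cx n q xs i = (if i = 0 then n*q+n+q else (i-1)*q + xs!(i-1))"

definition Vec :: "nat \<Rightarrow> nat \<Rightarrow> nat list set" where
 "Vec n q = {xs. set xs \<subseteq> {..<q} \<and> length xs = n}"

lemma xs_less: "xs \<in> Vec n q \<Longrightarrow> k < n \<Longrightarrow> xs!k < q"
  unfolding Vec_def using nth_mem by fastforce

lemma p0_in: assumes "xs \<in> Vec n q" "j < n" "i < n+2" shows "p0 n q xs j i \<in> EE n q"
proof -
  consider "i = 0" | "0 < i \<and> i \<le> n" | "i = n+1" using assms by linarith
  then show ?thesis
  proof cases
    case 1 then show ?thesis using assms by (auto simp: p0_def EE_def)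
  next
    case 2
    have "(3+j, (i-1)*q + xs!(i-1), 3+j) \<in> (\<lambda>(i,k,t). (3+i, k*q+t, 3+i)) ` ({..<n} \<times> {..<n} \<times> {..<q})"
      using 2 assms xs_less[OF assms(1), of "i-1"] by (intro image_eqI[of _ _ "(j, i-1, xs!(i-1))"]) auto
    then show ?thesis using 2 by (auto simp: p0_def EE_def)
  next
    case 3 then show ?thesis using assms by (auto simp: p0_def EE_def)
  qed
qed

lemma p0_chain: "Suc i < n+2 \<Longrightarrow> tgt (p0 n q xs j i) = src (p0 n q xs j (Suc i))"
  by (auto simp: p0_def src_def tgt_def)

lemma p0_fin: assumes "xs \<in> Vec n q" "j < n" shows "fin_path (Ar n q) 0 (map (p0 n q xs j) [0..<n+2])"
proof -
  have "chain_from (EE n q) 0 (map (p0 n q xs j) [0..<n+2])"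
    apply (rule chain_map)
    using p0_in[OF assms] apply blast
    using p0_chain apply blast
    apply (simp add: p0_def src_def)
    done
  then show ?thesis unfolding fin_path_def by (simp add: Ar_def)
qed

lemma p0_ptarget: "ptarget v (map (p0 n q xs j) [0..<n+2]) = 1"
  using ptarget_map[of v "p0 n q xs j" "n+1"] by (simp add: p0_def tgt_def)

lemma p0_cols: "map (col \<circ> p0 n q xs j) [0..<n+2] = map (cx n q xs) [0..<n+1] @ [n*q+j]"
proof -
  have "map (col \<circ> p0 n q xs j) [0..<n+1] = map (cx n q xs) [0..<n+1]"
    by (rule map_cong) (auto simp: p0_def cx_def col_def)
  moreover have "[0..<n+2] = [0..<n+1] @ [n+1]" by simp
  ultimately show ?thesis by (simp add: p0_def col_def)
qed

lemma p0_fold_aux: assumes "xs \<in> Vec n q" "j < n" shows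
  "k \<le> n \<Longrightarrow> foldl (d1 n q) 0 (map (p0 n q xs j) [0..<Suc k]) = (if j < k then xs!j else 0)"
proof (induction k)
  case 0 then show ?case by (simp add: p0_def d1_def col_def)
next
  case (Suc k)
  have xk: "xs!k < q" using xs_less[OF assms(1)] Suc by simp
  have lt: "k*q + xs!k < n*q" using kq_less[OF _ xk] Suc by simp
  have m: "map (p0 n q xs j) [0..<Suc (Suc k)] = map (p0 n q xs j) [0..<Suc k] @ [p0 n q xs j (Suc k)]"
    by simp
  have pk: "p0 n q xs j (Suc k) = (3+j, k*q + xs!k, 3+j)" using Suc.prems by (simp add: p0_def)
  have ih: "foldl (d1 n q) 0 (map (p0 n q xs j) [0..<Suc k]) = (if j < k then xs!j else 0)"
    using Suc.IH Suc.prems by simp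
  have "foldl (d1 n q) 0 (map (p0 n q xs j) [0..<Suc (Suc k)]) =
     d1 n q (if j < k then xs!j else 0) (3+j, k*q + xs!k, 3+j)"
    by (simp only: m foldl_append foldl_Cons foldl_Nil ih pk)
  also have "\<dots> = (if j < Suc k then xs!j else 0)"
    using lt xk by (auto simp: d1_def col_def src_def)
  finally show ?case .
qed

lemma p0_fold: assumes "xs \<in> Vec n q" "j < n" shows
  "foldl (d1 n q) 0 (map (p0 n q xs j) [0..<n+2]) = xs!j"
proof -
  have "[0..<n+2] = [0..<Suc n] @ [n+1]" by simp
  then have "foldl (d1 n q) 0 (map (p0 n q xs j) [0..<n+2]) =
      d1 n q (xs!j) (3+j, n*q+j, 1)"
    using p0_fold_aux[OF assms, of n] assms by (simp add: p0_def)
  also have "\<dots> = xs!j" by (simp add: d1_def col_def)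
  finally show ?thesis .
qed


lemma p0_cols1: "map (col \<circ> p0 n q xs j) [0..<n+1] = map (cx n q xs) [0..<n+1]"
  by (rule map_cong) (auto simp: p0_def cx_def col_def)

lemma S1_det: assumes xs: "xs \<in> Vec n q" and j: "j < n"
  and c: "consistent_inf_path (Ar n q) (S1 n q) 0 p'"
  and cols: "\<forall>i<n+2. col (p' i) = col (p0 n q xs j i)"
  shows "\<forall>i<n+2. p' i = p0 n q xs j i"
proof -
  have E: "\<And>i. p' i \<in> EE n q" and s0: "src (p' 0) = 0" and ch: "\<And>i. tgt (p' i) = src (p' (Suc i))"
    using c unfolding consistent_inf_path_def by (auto simp: Ar_def)
  obtain i' where i': "i' < n" "p' 0 = (0, n*q+n+q, 3+i')"
    using EE_cases[OF E[of 0]] s0 by (auto simp: src_def)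
  have loopk: "k \<le> n \<Longrightarrow> p' k = p0 n q xs i' k" for k
  proof (induction k)
    case 0 then show ?case using i' by (simp add: p0_def)
  next
    case (Suc k)
    have "tgt (p' k) = 3+i'" using Suc.IH Suc.prems by (cases k) (simp_all add: p0_def tgt_def)
    then have sk: "src (p' (Suc k)) = 3+i'" using ch[of k] by simp
    have xk: "xs!k < q" using xs_less[OF xs] Suc by simp
    have ck: "col (p' (Suc k)) = k*q + xs!k" using cols Suc by (simp add: p0_def col_def)
    have lt: "k*q + xs!k < n*q" using kq_less[OF _ xk] Suc by simp
    have "p' (Suc k) = (3+i', k*q + xs!k, 3+i')"
      using EE_cases[OF E[of "Suc k"]] sk ck lt by (auto simp: src_def col_def)
    then show ?case using Suc by (simp add: p0_def)
  qed
  have "tgt (p' n) = 3+i'" using loopk[of n] by (cases n) (simp_all add: p0_def tgt_def)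
  then have sn: "src (p' (n+1)) = 3+i'" using ch[of n] by simp
  have cn: "col (p' (n+1)) = n*q+j" using cols by (simp add: p0_def col_def)
  have "i' = j \<and> p' (n+1) = (3+j, n*q+j, 1)"
  proof -
    have nl: "\<not> (\<exists>i<n. \<exists>k<n. \<exists>t<q. p' (n+1) = (3+i,k*q+t,3+i))"
    proof
      assume "\<exists>i<n. \<exists>k<n. \<exists>t<q. p' (n+1) = (3+i,k*q+t,3+i)"
      then obtain i k t where "k < n" "t < q" "p' (n+1) = (3+i,k*q+t,3+i)" by blast
      then show False using cn kq_less[of k n t q] by (simp add: col_def)
    qed
    show ?thesis using EE_cases[OF E[of "n+1"]] nl sn cn by (auto simp: src_def col_def)
  qed
  then have ij: "i' = j" and pn: "p' (n+1) = (3+j, n*q+j, 1)" by auto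
  show ?thesis
  proof (intro allI impI)
    fix i assume "i < n+2"
    then consider "i \<le> n" | "i = n+1" by linarith
    then show "p' i = p0 n q xs j i"
    proof cases
      case 1 then show ?thesis using loopk ij by simp
    next
      case 2 then show ?thesis using pn by (simp add: p0_def)
    qed
  qed
qed


lemma core:
  assumes n: "n > 0" and q: "q > 0" and xs: "xs \<in> Vec n q" and j: "j < n"
  and st: "strategy (Ar n q) S2"
  and sub: "col_set (Ar n q) S2 0 \<subseteq> col_set (Ar n q) (S1 n q) 0"
  shows "col (S2 0 (map (p0 n q xs j) [0..<n+2])) = n*q+n+xs!j"
proof -
  define P where "P = map (p0 n q xs j) [0..<n+2]"
  define e where "e = S2 0 P"
  have fp: "fin_path (Ar n q) 0 P" unfolding P_def using p0_fin[OF xs j] .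
  have pt: "ptarget 0 P = 1" unfolding P_def using p0_ptarget .
  have eE: "e \<in> EE n q" and se: "src e = 1"
    using st fp pt unfolding strategy_def e_def by (auto simp: Ar_def)
  obtain m where m: "m < q" "e = (1, n*q+n+m, 2)"
    using EE_cases[OF eE] se by (auto simp: src_def)
  define p where "p i = (if i < n+2 then p0 n q xs j i else if i = n+2 then e else (2, n*q+n+q, 2))" for i
  have pE: "p i \<in> EE n q" for i
    using p0_in[OF xs j] eE by (auto simp: p_def EE_def)
  have pch: "tgt (p i) = src (p (Suc i))" for i
  proof -
    consider "Suc i < n+2" | "i = n+1" | "i \<ge> n+2" by linarith
    then show ?thesis
    proof cases
      case 1 then show ?thesis using p0_chain[OF 1] by (simp add: p_def)
    next
      case 2 then show ?thesis using m by (simp add: p_def p0_def tgt_def src_def)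
    next
      case 3 then show ?thesis using m by (auto simp: p_def tgt_def src_def)
    qed
  qed
  have ptg: "tgt (p i) = 1 \<Longrightarrow> i = n+1" for i
    using m by (auto simp: p_def p0_def tgt_def split: if_splits)
  have mp: "map p [0..<n+2] = P" unfolding P_def by (rule map_cong) (auto simp: p_def)
  have cons: "consistent_inf_path (Ar n q) S2 0 p"
    unfolding consistent_inf_path_def
  proof (intro conjI allI impI)
    fix i show "p i \<in> aE (Ar n q)" using pE by (simp add: Ar_def)
  next
    show "src (p 0) = 0" by (simp add: p_def p0_def src_def)
  next
    fix i show "tgt (p i) = src (p (Suc i))" by (rule pch)
  next
    assume "0 \<in> aV0 (Ar n q)" then show "p 0 = S2 0 []" by (simp add: Ar_def)
  next
    fix i assume "tgt (p i) \<in> aV0 (Ar n q)"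
    then have "i = n+1" using ptg by (simp add: Ar_def)
    then show "p (Suc i) = S2 0 (map p [0..<Suc i])" using mp by (simp add: p_def e_def)
  qed
  then have "(\<lambda>i. col (p i)) \<in> col_set (Ar n q) (S1 n q) 0"
    using sub unfolding col_set_def by blast
  then obtain p' where p'c: "(\<lambda>i. col (p i)) = (\<lambda>i. col (p' i))"
    and p'cons: "consistent_inf_path (Ar n q) (S1 n q) 0 p'"
    unfolding col_set_def by blast
  have cc: "col (p i) = col (p' i)" for i using p'c by meson
  have "\<forall>i<n+2. col (p' i) = col (p0 n q xs j i)"
  proof (intro allI impI)
    fix i assume "i < n+2"
    then show "col (p' i) = col (p0 n q xs j i)" using cc[of i] by (simp add: p_def)
  qed
  then have eqp: "\<forall>i<n+2. p' i = p0 n q xs j i" using S1_det[OF xs j p'cons] by blast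
  then have mp': "map p' [0..<n+2] = P" unfolding P_def by simp
  have t1: "tgt (p' (n+1)) = 1" using eqp by (simp add: p0_def tgt_def)
  have c4: "\<And>i. tgt (p' i) \<in> aV0 (Ar n q) \<Longrightarrow> p' (Suc i) = S1 n q 0 (map p' [0..<Suc i])"
    using p'cons unfolding consistent_inf_path_def by blast
  have "p' (Suc (n+1)) = S1 n q 0 (map p' [0..<Suc (n+1)])"
    by (rule c4) (use t1 in \<open>simp add: Ar_def\<close>)
  moreover have sn2: "Suc (n+1) = n+2" by simp
  ultimately have "p' (n+2) = S1 n q 0 (map p' [0..<n+2])" by (simp only: sn2)
  then have "p' (n+2) = S1 n q 0 P" by (simp only: mp')
  then have "col (p' (n+2)) = n*q+n+(foldl (d1 n q) 0 P mod q)"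
    by (simp only: S1_def col_def fst_conv snd_conv)
  then have "col (p' (n+2)) = n*q+n+(xs!j mod q)"
    using p0_fold[OF xs j] unfolding P_def by (simp only:)
  also have "xs!j mod q = xs!j" using xs_less[OF xs j] by simp
  finally have "col (p (n+2)) = n*q+n+xs!j" using cc by simp
  then show ?thesis by (simp add: p_def e_def P_def)
qed

theorem theorem3:
  fixes n q :: nat
  assumes "n > 0" and "q > 0"
  shows "\<exists>(A :: (nat, nat) arena) u S1.
           arena A \<and> card (aV A) = n + 3 \<and> u \<in> aV A \<and> q_state_strategy A S1 q \<and>
           (\<forall>S2 Q. chromatic_q_state_strategy A S2 Q \<and> col_set A S2 u \<subseteq> col_set A S1 u
                \<longrightarrow> Q \<ge> q ^ n)"
proof -
  note n = assms(1) and q = assms(2)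
  have main: "\<forall>S2 Q. chromatic_q_state_strategy (Ar n q) S2 Q \<and> col_set (Ar n q) S2 0 \<subseteq> col_set (Ar n q) (S1 n q) 0
                \<longrightarrow> Q \<ge> q ^ n"
  proof (intro allI impI)
    fix S2 Q
    assume a: "chromatic_q_state_strategy (Ar n q) S2 Q \<and> col_set (Ar n q) S2 0 \<subseteq> col_set (Ar n q) (S1 n q) 0"
    then have sub: "col_set (Ar n q) S2 0 \<subseteq> col_set (Ar n q) (S1 n q) 0" by blast
    from a obtain M m0 \<delta> where st: "strategy (Ar n q) S2" and ms: "memory_structure (Ar n q) M m0 \<delta>"
      and chr: "chromatic (Ar n q) M \<delta>" and cM: "card M = Q" and mst: "is_M_strategy (Ar n q) m0 \<delta> S2"
      unfolding chromatic_q_state_strategy_def by blast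
    from chr obtain \<sigma> where chr': "\<forall>m\<in>M. \<forall>e\<in>EE n q. \<delta> m e = \<sigma> m (col e)"
      unfolding chromatic_def by (auto simp: Ar_def)
    have fM: "finite M" and m0: "m0 \<in> M" and clo: "\<forall>m\<in>M. \<forall>e\<in>EE n q. \<delta> m e \<in> M"
      using ms unfolding memory_structure_def by (auto simp: Ar_def)
    define \<mu> where "\<mu> xs = foldl \<sigma> m0 (map (cx n q xs) [0..<n+1])" for xs
    have memP: "foldl \<delta> m0 (map (p0 n q xs j) [0..<n+2]) = \<sigma> (\<mu> xs) (n*q+j)"
      if xs: "xs \<in> Vec n q" and j: "j < n" for xs j
    proof -
      have "set (map (p0 n q xs j) [0..<n+2]) \<subseteq> EE n q" using p0_in[OF xs j] by auto
      then have "foldl \<delta> m0 (map (p0 n q xs j) [0..<n+2]) = foldl \<sigma> m0 (map col (map (p0 n q xs j) [0..<n+2]))"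
        using fold_chrom[OF _ clo chr' m0] by blast
      also have "map col (map (p0 n q xs j) [0..<n+2]) = map (cx n q xs) [0..<n+1] @ [n*q+j]"
        using p0_cols[of n q xs j] by simp
      finally show ?thesis by (simp add: \<mu>_def)
    qed
    have \<mu>M: "\<mu> xs \<in> M" if xs: "xs \<in> Vec n q" for xs
    proof -
      have "set (map (p0 n q xs 0) [0..<n+1]) \<subseteq> EE n q" using p0_in[OF xs n] by auto
      then have h: "foldl \<delta> m0 (map (p0 n q xs 0) [0..<n+1]) = foldl \<sigma> m0 (map col (map (p0 n q xs 0) [0..<n+1]))
          \<and> foldl \<delta> m0 (map (p0 n q xs 0) [0..<n+1]) \<in> M"
        using fold_chrom[OF _ clo chr' m0] by blast
      have h2: "map col (map (p0 n q xs 0) [0..<n+1]) = map (cx n q xs) [0..<n+1]"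
        using p0_cols1[of n q xs 0] by simp
      have eqm: "\<mu> xs = foldl \<sigma> m0 (map col (map (p0 n q xs 0) [0..<n+1]))"
        by (simp only: \<mu>_def h2)
      show ?thesis using h eqm by metis
    qed
    have inj: "inj_on \<mu> (Vec n q)"
    proof
      fix xs ys assume xs: "xs \<in> Vec n q" and ys: "ys \<in> Vec n q" and eq: "\<mu> xs = \<mu> ys"
      show "xs = ys"
      proof (rule nth_equalityI)
        show "length xs = length ys" using xs ys by (simp add: Vec_def)
      next
        fix j assume "j < length xs"
        then have j: "j < n" using xs by (simp add: Vec_def)
        have "S2 0 (map (p0 n q xs j) [0..<n+2]) = S2 0 (map (p0 n q ys j) [0..<n+2])"
          using mst p0_fin[OF xs j] p0_fin[OF ys j] p0_ptarget memP[OF xs j] memP[OF ys j] eq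
          unfolding is_M_strategy_def by (simp add: Ar_def)
        then show "xs!j = ys!j" using core[OF n q xs j st sub] core[OF n q ys j st sub] by simp
      qed
    qed
    have "card (Vec n q) \<le> card M"
      using card_inj_on_le[OF inj _ fM] \<mu>M by blast
    moreover have "card (Vec n q) = q^n"
      unfolding Vec_def using card_lists_length_eq[of "{..<q}" n] by simp
    ultimately show "Q \<ge> q^n" using cM by simp
  qed
  show ?thesis
    apply (rule exI[of _ "Ar n q"], rule exI[of _ 0], rule exI[of _ "S1 n q"])
    using arena_Ar[OF n q] S1_qstate[OF n q] main by (simp add: Ar_def)
qed

end
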